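(* Let $x\in\Sigma$, $\ell\ge1$, $n\ge2$ and $\varepsilon=2^{-h}$ with $h\in\mathbb N$; put $\varepsilon_0=1/2$ and $\theta_{nh}=\frac{(n+h-1)^2-(n+h-1)}{n^2-n}$. Then \begin{align*} N_\ell(x,n,\varepsilon)&=N_{\ell+h-1}(x,n+h-1,\varepsilon_0),\\ \lambda_\ell(x,n,\varepsilon)&=\theta_{nh}\,\lambda_{\ell+h-1}(x,n+h-1,\varepsilon_0),\\ \Lambda_\ell(x,n,\varepsilon)&=\theta_{nh}\,\Lambda_{\ell+h-1}(x,n+h-1,\varepsilon_0),\\ \mathrm{RR}_\ell(x,n,\varepsilon)&=\theta_{nh}\big(\mathrm{RR}_{\ell+h-1}(x,n+h-1,\varepsilon_0)-(h-1)\Lambda_{\ell+h-1}(x,n+h-1,\varepsilon_0)\big). \end{align*}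
   Context: $A=\{0,1\}$, $\Sigma=A^{\mathbb N_0}$ with metric $\rho(y,z)=2^{-\min\{i\ge0:\,y_i\ne z_i\}}$ for $y\ne z$, shift $\sigma$. Recurrence plot $R(x,n,\varepsilon)$: $n\times n$ matrix ($0\le i,j<n$) with entry $1$ iff $\rho(\sigma^ix,\sigma^jx)\le\varepsilon$. A line of length $\ell$: $(i,j,\ell)$ with $0\le i,j\le n-\ell$, $i\ne j$, entries $(i+k,j+k)=1$ for $0\le k<\ell$, entry $(i-1,j-1)=0$ if $\min\{i,j\}>0$, entry $(i+\ell,j+\ell)=0$ if $\max\{i,j\}<n-\ell$. $N_\ell(x,n,\varepsilon)$ = number of lines of length exactly $\ell$ (boundary ones included), $\lambda_\ell=N_\ell/(n^2-n)$, $\Lambda_\ell=\sum_{l\ge\ell}\lambda_l$, $\mathrm{RR}_\ell=\sum_{l\ge\ell}l\lambda_l$. *)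

theory Defs
  imports Complex_Main
begin

text \<open>Sequences over the alphabet A = {0,1}: functions nat => nat with values in {0,1}.\<close>

definition shift :: "nat \<Rightarrow> (nat \<Rightarrow> nat) \<Rightarrow> (nat \<Rightarrow> nat)" where
  "shift i x = (\<lambda>k. x (k + i))"

definition rho :: "(nat \<Rightarrow> nat) \<Rightarrow> (nat \<Rightarrow> nat) \<Rightarrow> real" where
  "rho y z = (if y = z then 0 else (1/2) ^ (LEAST i. y i \<noteq> z i))"

definition RP :: "(nat \<Rightarrow> nat) \<Rightarrow> real \<Rightarrow> nat \<Rightarrow> nat \<Rightarrow> bool" where
  "RP x eps i j = (rho (shift i x) (shift j x) \<le> eps)"

definition is_line :: "(nat \<Rightarrow> nat) \<Rightarrow> nat \<Rightarrow> real \<Rightarrow> nat \<Rightarrow> nat \<Rightarrow> nat \<Rightarrow> bool" where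
  "is_line x n eps i j l \<longleftrightarrow>
     i + l \<le> n \<and> j + l \<le> n \<and> i \<noteq> j \<and>
     (\<forall>k<l. RP x eps (i + k) (j + k)) \<and>
     (min i j > 0 \<longrightarrow> \<not> RP x eps (i - 1) (j - 1)) \<and>
     (max i j + l < n \<longrightarrow> \<not> RP x eps (i + l) (j + l))"

definition N_lines :: "nat \<Rightarrow> (nat \<Rightarrow> nat) \<Rightarrow> nat \<Rightarrow> real \<Rightarrow> nat" where
  "N_lines l x n eps = card {(i, j). is_line x n eps i j l}"

definition lam :: "nat \<Rightarrow> (nat \<Rightarrow> nat) \<Rightarrow> nat \<Rightarrow> real \<Rightarrow> real" where
  "lam l x n eps = real (N_lines l x n eps) / (real n ^ 2 - real n)"

text \<open>Lines have length at most n, so the sum over l >= ell is the finite sum over ell..n.\<close>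
definition Lam :: "nat \<Rightarrow> (nat \<Rightarrow> nat) \<Rightarrow> nat \<Rightarrow> real \<Rightarrow> real" where
  "Lam l x n eps = (\<Sum>m\<in>{l..n}. lam m x n eps)"

definition RR :: "nat \<Rightarrow> (nat \<Rightarrow> nat) \<Rightarrow> nat \<Rightarrow> real \<Rightarrow> real" where
  "RR l x n eps = (\<Sum>m\<in>{l..n}. real m * lam m x n eps)"

end

theory Submission
  imports Defs
begin

lemma RP_char:
  "RP x ((1/2::real) ^ h) i j \<longleftrightarrow> (\<forall>k<h. x (i + k) = x (j + k))"
proof -
  let ?y = "shift i x" and ?z = "shift j x"
  show ?thesis
  proof (cases "?y = ?z")
    case True
    then have "\<forall>k. x (k + i) = x (k + j)" unfolding shift_def by metis
    then show ?thesis using True unfolding RP_def rho_def by (simp add: add.commute)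
  next
    case False
    then obtain m where m: "?y m \<noteq> ?z m" by blast
    let ?L = "LEAST i. ?y i \<noteq> ?z i"
    have "((1/2::real) ^ ?L \<le> (1/2) ^ h) \<longleftrightarrow> h \<le> ?L"
      by (simp add: power_decreasing_iff)
    also have "\<dots> \<longleftrightarrow> (\<forall>k<h. ?y k = ?z k)"
    proof
      assume hL: "h \<le> ?L"
      show "\<forall>k<h. ?y k = ?z k"
      proof (intro allI impI)
        fix k assume "k < h"
        then have "k < ?L" using hL by linarith
        then show "?y k = ?z k" by (rule not_less_Least[THEN notnotD])
      qed
    next
      assume a: "\<forall>k<h. ?y k = ?z k"
      have "?y ?L \<noteq> ?z ?L" using LeastI[of "\<lambda>i. ?y i \<noteq> ?z i" m] m by blast
      then show "h \<le> ?L" using a not_le by blast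
    qed
    finally show ?thesis using False unfolding RP_def rho_def shift_def
      by (simp add: add.commute)
  qed
qed

lemma RP0_char: "RP x (1/2::real) i j \<longleftrightarrow> x i = x j"
  using RP_char[of x 1 i j] by simp

lemma line_eq:
  assumes "l \<ge> 1" "h \<ge> 1"
  shows "is_line x n ((1/2::real)^h) i j l \<longleftrightarrow> is_line x (n+h-1) (1/2) i j (l+h-1)"
proof -
  have A: "(\<forall>k<l. \<forall>t<h. x (i + k + t) = x (j + k + t)) \<longleftrightarrow> (\<forall>k<l+h-1. x (i+k) = x (j+k))"
  proof
    assume a: "\<forall>k<l. \<forall>t<h. x (i + k + t) = x (j + k + t)"
    show "\<forall>k<l+h-1. x (i+k) = x (j+k)"
    proof (intro allI impI)
      fix k assume k: "k < l+h-1"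
      show "x (i+k) = x (j+k)"
      proof (cases "k < l")
        case True then show ?thesis using a assms by (metis add.right_neutral less_one le_trans not_le)
      next
        case False
        then have "l - 1 < l" "k - (l-1) < h" using k assms by auto
        then have "x (i + (l-1) + (k-(l-1))) = x (j + (l-1) + (k-(l-1)))" using a by blast
        then show ?thesis using False by simp
      qed
    qed
  next
    assume a: "\<forall>k<l+h-1. x (i+k) = x (j+k)"
    show "\<forall>k<l. \<forall>t<h. x (i + k + t) = x (j + k + t)"
    proof (intro allI impI)
      fix k t assume "k < l" "t < h"
      then have "k + t < l + h - 1" by simp
      then show "x (i + k + t) = x (j + k + t)" using a by (metis add.assoc)
    qed
  qed
  show ?thesis
  proof (cases "\<forall>k<l+h-1. x (i+k) = x (j+k)")
    case False
    then show ?thesis unfolding is_line_def RP_char RP0_char using A by (auto simp: add.assoc)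
  next
    case True
    have L: "min i j > 0 \<Longrightarrow> (\<not> (\<forall>t<h. x (i - 1 + t) = x (j - 1 + t))) \<longleftrightarrow> x (i-1) \<noteq> x (j-1)"
    proof
      assume m: "min i j > 0" and "\<not> (\<forall>t<h. x (i - 1 + t) = x (j - 1 + t))"
      then obtain t where t: "t < h" "x (i - 1 + t) \<noteq> x (j - 1 + t)" by blast
      show "x (i-1) \<noteq> x (j-1)"
      proof (cases t)
        case 0 then show ?thesis using t by simp
      next
        case (Suc s)
        then have "s < l + h - 1" using t assms by simp
        then have "x (i+s) = x (j+s)" using True by blast
        moreover have "i - 1 + t = i + s" "j - 1 + t = j + s" using m Suc by auto
        ultimately show ?thesis using t by simp
      qed
    next
      assume "x (i-1) \<noteq> x (j-1)"
      then show "\<not> (\<forall>t<h. x (i - 1 + t) = x (j - 1 + t))" using assms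
        by (metis add.right_neutral less_le_trans zero_less_one)
    qed
    have R: "(\<not> (\<forall>t<h. x (i + l + t) = x (j + l + t))) \<longleftrightarrow> x (i+(l+h-1)) \<noteq> x (j+(l+h-1))"
    proof
      assume "\<not> (\<forall>t<h. x (i + l + t) = x (j + l + t))"
      then obtain t where t: "t < h" "x (i + l + t) \<noteq> x (j + l + t)" by blast
      show "x (i+(l+h-1)) \<noteq> x (j+(l+h-1))"
      proof (cases "t = h - 1")
        case True then show ?thesis using t assms by (simp add: add.assoc)
      next
        case False
        then have "l + t < l + h - 1" using t by simp
        then have "x (i + (l+t)) = x (j + (l+t))" using \<open>\<forall>k<l+h-1. x (i+k) = x (j+k)\<close> by blast
        then show ?thesis using t by (simp add: add.assoc)
      qed
    next
      assume "x (i+(l+h-1)) \<noteq> x (j+(l+h-1))"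
      moreover have "i+(l+h-1) = i + l + (h-1)" "j+(l+h-1) = j + l + (h-1)" using assms by auto
      ultimately have "x (i + l + (h-1)) \<noteq> x (j + l + (h-1))" by metis
      moreover have "h - 1 < h" using assms by simp
      ultimately show "\<not> (\<forall>t<h. x (i + l + t) = x (j + l + t))" by blast
    qed
    have B: "(max i j + l < n) \<longleftrightarrow> (max i j + (l+h-1) < n+h-1)" using assms by auto
    have C: "(i + l \<le> n) \<longleftrightarrow> (i + (l+h-1) \<le> n+h-1)" "(j + l \<le> n) \<longleftrightarrow> (j + (l+h-1) \<le> n+h-1)"
      using assms by auto
    show ?thesis unfolding is_line_def RP_char RP0_char
      using A True L R B C by (simp add: add.assoc del: max_less_iff_conj) 
  qed
qed

theorem mainTheorem11:
  fixes x :: "nat \<Rightarrow> nat" and l n h :: nat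
  assumes "\<forall>k. x k \<in> {0, 1}"
    and "l \<ge> 1" and "n \<ge> 2" and "h \<ge> 1"
  defines "eps \<equiv> (1/2::real) ^ h"
    and "eps0 \<equiv> (1/2::real)"
    and "theta \<equiv> (real (n + h - 1) ^ 2 - real (n + h - 1)) / (real n ^ 2 - real n)"
  shows "N_lines l x n eps = N_lines (l + h - 1) x (n + h - 1) eps0
    \<and> lam l x n eps = theta * lam (l + h - 1) x (n + h - 1) eps0
    \<and> Lam l x n eps = theta * Lam (l + h - 1) x (n + h - 1) eps0
    \<and> RR l x n eps = theta * (RR (l + h - 1) x (n + h - 1) eps0
                                 - (real h - 1) * Lam (l + h - 1) x (n + h - 1) eps0)"
proof -
  have N: "N_lines m x n eps = N_lines (m + h - 1) x (n + h - 1) eps0" if "m \<ge> 1" for m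
    unfolding N_lines_def eps_def eps0_def using line_eq[OF that assms(4)] by simp
  have pos: "real q ^ 2 - real q > 0" if "q \<ge> 2" for q :: nat
  proof -
    have "real q \<ge> 2" using that by simp
    then have "real q * (real q - 1) > 0" by simp
    then show ?thesis by (simp add: power2_eq_square algebra_simps)
  qed
  have d1: "real n ^ 2 - real n > 0" using pos assms(3) by blast
  have d2: "real (n+h-1) ^ 2 - real (n+h-1) > 0" using pos[of "n+h-1"] assms(3,4) by linarith
  have lm: "lam m x n eps = theta * lam (m + h - 1) x (n + h - 1) eps0" if "m \<ge> 1" for m
  proof -
    have g: "a / b = (c / b) * (a / c)" if "b \<noteq> 0" "c \<noteq> 0" for a b c :: real
      using that by simp
    show ?thesis unfolding lam_def theta_def N[OF that]
      by (rule g) (use d1 d2 in auto)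
  qed
  have sh: "\<And>f. sum f {l+h-1..n+h-1} = (\<Sum>m\<in>{l..n}. f (m + (h-1)))"
    using assms(4) sum.shift_bounds_cl_nat_ivl[of _ l "h-1" n] by simp
  have Lm: "Lam l x n eps = theta * Lam (l + h - 1) x (n + h - 1) eps0"
    unfolding Lam_def sh sum_distrib_left
    by (rule sum.cong) (use lm assms(2,4) in auto)
  have "RR l x n eps = (\<Sum>m\<in>{l..n}. theta * (real (m + (h-1)) * lam (m + (h-1)) x (n+h-1) eps0
        - (real h - 1) * lam (m + (h-1)) x (n+h-1) eps0))"
    unfolding RR_def
    by (rule sum.cong) (use lm assms(2,4) in \<open>auto simp: algebra_simps of_nat_diff\<close>)
  also have "\<dots> = theta * (RR (l + h - 1) x (n + h - 1) eps0
                                 - (real h - 1) * Lam (l + h - 1) x (n + h - 1) eps0)"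
    unfolding RR_def Lam_def sh by (simp only: sum_distrib_left[of "real h - 1"] sum_subtractf[symmetric] sum_distrib_left[of theta])
  finally show ?thesis using N lm Lm assms(2) by simp
qed

end
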